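(* If a graph $G$ has a $\gamma$-set $D$ such that $\gamma(G-x)>\gamma(G)$ for every $x\in D$, then $\gamma(G)=\gamma_{\rm cer}(G)$.
   Context: All graphs are finite and simple; $G-x$ denotes the graph obtained by deleting vertex $x$. A set $D\subseteq V_G$ is a dominating set of $G$ if every vertex of $V_G-D$ has a neighbor in $D$; $\gamma(G)$ is the minimum cardinality of a dominating set, and a $\gamma$-set is a dominating set of cardinality $\gamma(G)$. A set $D\subseteq V_G$ is a certified dominating set of $G$ if $D$ is a dominating set of $G$ and every vertex of $D$ has either zero or at least two neighbors in $V_G-D$; $\gamma_{\rm cer}(G)$ is the minimum cardinality of a certified dominating set of $G$. *)

theory Defs
  imports Main
begin

text \<open>A finite simple graph is given by a finite vertex set V and an edge relation E
  that is symmetric and irreflexive on V. Only edges between vertices of V matter.\<close>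

definition simple_graph :: "'a set \<Rightarrow> ('a \<Rightarrow> 'a \<Rightarrow> bool) \<Rightarrow> bool" where
  "simple_graph V E \<longleftrightarrow> finite V \<and> (\<forall>u\<in>V. \<forall>v\<in>V. E u v \<longrightarrow> E v u) \<and> (\<forall>v\<in>V. \<not> E v v)"

definition dominating_set :: "'a set \<Rightarrow> ('a \<Rightarrow> 'a \<Rightarrow> bool) \<Rightarrow> 'a set \<Rightarrow> bool" where
  "dominating_set V E D \<longleftrightarrow> D \<subseteq> V \<and> (\<forall>v\<in>V - D. \<exists>u\<in>D. E v u)"

definition domination_number :: "'a set \<Rightarrow> ('a \<Rightarrow> 'a \<Rightarrow> bool) \<Rightarrow> nat" where
  "domination_number V E = Min (card ` {D. dominating_set V E D})"

definition gamma_set :: "'a set \<Rightarrow> ('a \<Rightarrow> 'a \<Rightarrow> bool) \<Rightarrow> 'a set \<Rightarrow> bool" where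
  "gamma_set V E D \<longleftrightarrow> dominating_set V E D \<and> card D = domination_number V E"

definition certified_dominating_set :: "'a set \<Rightarrow> ('a \<Rightarrow> 'a \<Rightarrow> bool) \<Rightarrow> 'a set \<Rightarrow> bool" where
  "certified_dominating_set V E D \<longleftrightarrow> dominating_set V E D \<and>
     (\<forall>v\<in>D. card {u\<in>V - D. E v u} = 0 \<or> card {u\<in>V - D. E v u} \<ge> 2)"

definition certified_domination_number :: "'a set \<Rightarrow> ('a \<Rightarrow> 'a \<Rightarrow> bool) \<Rightarrow> nat" where
  "certified_domination_number V E = Min (card ` {D. certified_dominating_set V E D})"

text \<open>Vertex deletion G - x: the graph on V - {x} with the same (restricted) edge relation.\<close>

end

theory Submission
  imports Defs
begin

lemma dom_le:
  assumes "finite V" "dominating_set V E S"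
  shows "domination_number V E \<le> card S"
proof -
  have "{D. dominating_set V E D} \<subseteq> Pow V" by (auto simp: dominating_set_def)
  hence "finite {D. dominating_set V E D}" using assms(1) by (meson finite_Pow_iff finite_subset)
  thus ?thesis unfolding domination_number_def using assms(2) by (intro Min_le) auto
qed

theorem corollary2p5:
  fixes V :: "'a set" and E :: "'a \<Rightarrow> 'a \<Rightarrow> bool" and D :: "'a set"
  assumes "simple_graph V E"
    and "gamma_set V E D"
    and "\<forall>x\<in>D. domination_number (V - {x}) E > domination_number V E"
  shows "domination_number V E = certified_domination_number V E"
proof -
  have fin: "finite V" and sym: "\<And>u v. u\<in>V \<Longrightarrow> v\<in>V \<Longrightarrow> E u v \<Longrightarrow> E v u"
    using assms(1) by (auto simp: simple_graph_def)
  have Dd: "dominating_set V E D" and cD: "card D = domination_number V E"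
    using assms(2) by (auto simp: gamma_set_def)
  have DV: "D \<subseteq> V" using Dd by (auto simp: dominating_set_def)
  have cert: "certified_dominating_set V E D"
    unfolding certified_dominating_set_def
  proof (intro conjI Dd ballI)
    fix v assume vD: "v \<in> D"
    show "card {u\<in>V - D. E v u} = 0 \<or> card {u\<in>V - D. E v u} \<ge> 2"
    proof (rule ccontr)
      assume "\<not> ?thesis"
      hence "card {u\<in>V - D. E v u} = 1" by linarith
      then obtain u where U: "{u\<in>V - D. E v u} = {u}" using card_1_singletonE by blast
      hence uV: "u \<in> V" "u \<notin> D" "E v u" by auto
      define D' where "D' = (D - {v}) \<union> {u}"
      have "dominating_set (V - {v}) E D'"
        unfolding dominating_set_def
      proof (intro conjI ballI)
        show "D' \<subseteq> V - {v}" using DV uV vD by (auto simp: D'_def)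
      next
        fix w assume w: "w \<in> V - {v} - D'"
        show "\<exists>d\<in>D'. E w d"
        proof (cases "w = u")
          case True thus ?thesis using w by (auto simp: D'_def)
        next
          case False
          have "w \<in> V - D" using w by (auto simp: D'_def)
          then obtain d where d: "d \<in> D" "E w d" using Dd by (auto simp: dominating_set_def)
          have "d \<noteq> v"
          proof
            assume "d = v"
            hence "E v w" using sym d DV \<open>w \<in> V - D\<close> by blast
            hence "w \<in> {u\<in>V - D. E v u}" using \<open>w \<in> V - D\<close> by auto
            thus False using U False by auto
          qed
          thus ?thesis using d by (auto simp: D'_def)
        qed
      qed
      hence "domination_number (V - {v}) E \<le> card D'" using fin by (intro dom_le) auto
      also have "card D' \<le> card (D - {v}) + 1" unfolding D'_def
        using card_Un_le[of "D - {v}" "{u}"] by simp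
      also have "card (D - {v}) + 1 = card D"
        using vD finite_subset[OF DV fin] 
        by (metis One_nat_def Suc_pred card_Diff_singleton card_gt_0_iff empty_iff Suc_eq_plus1)
      finally show False using assms(3) vD cD by force
    qed
  qed
  have cfin: "finite {S. certified_dominating_set V E S}"
    by (rule finite_subset[of _ "Pow V"]) (auto simp: certified_dominating_set_def dominating_set_def fin)
  have le1: "certified_domination_number V E \<le> domination_number V E"
    unfolding certified_domination_number_def using cD cfin cert
    by (metis (mono_tags, lifting) Min_le finite_imageI image_eqI mem_Collect_eq)
  have "\<forall>k\<in>card ` {S. certified_dominating_set V E S}. domination_number V E \<le> k"
    using fin by (auto simp: certified_dominating_set_def intro: dom_le)
  hence "domination_number V E \<le> certified_domination_number V E"
    unfolding certified_domination_number_def using cfin cert by (intro Min.boundedI) auto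
  thus ?thesis using le1 by linarith
qed

end
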